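(* Let $G$ be a graph with no isolated vertex and let $H$ be a nontrivial graph (i.e., of order at least two) such that $\gamma_I(H)\ne 3$ or $\gamma(H)\ne 3$. Then: (i) if $\gamma(H)=1$, then $\gamma_I(G\circ H)=\gamma_{(2,1,0)}(G)$; (ii) if $\gamma_2(H)=\gamma(H)=2$, then $\gamma_I(G\circ H)=\gamma_{(2,2,0)}(G)$; (iii) if $\gamma_2(H)>\gamma(H)=2$, then $\gamma_I(G\circ H)=\gamma_{(2,2,1)}(G)$; (iv) if $\gamma(H)\ge 3$, then $\gamma_I(G\circ H)=\gamma_{(2,2,2)}(G)$.
   Context: All graphs are finite and simple; $N(v)$ denotes the open neighbourhood of a vertex $v$. For an integer $l\ge1$ and a vector $w=(w_0,\dots,w_l)$ of nonnegative integers with $w_0\ge 1$, a function $f:V(G)\to\{0,1,\dots,l\}$ is a $w$-dominating function on $G$ if $\sum_{u\in N(v)}f(u)\ge w_i$ for every vertex $v$ with $f(v)=i$ ($i=0,\dots,l$). The weight of $f$ is $\omega(f)=\sum_{v\in V(G)}f(v)$, and the $w$-domination number $\gamma_w(G)=\gamma_{(w_0,\dots,w_l)}(G)$ is the minimum weight of a $w$-dominating function on $G$. The Italian domination number is $\gamma_I(G)=\gamma_{(2,0,0)}(G)$, i.e., the minimum weight of $f:V(G)\to\{0,1,2\}$ with $\sum_{u\in N(v)}f(u)\ge 2$ for every $v$ with $f(v)=0$. $\gamma(H)$ is the domination number of $H$, and $\gamma_2(H)$ is the $2$-domination number: the minimum cardinality of a set $S\subseteq V(H)$ such that every vertex not in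 $S$ has at least two neighbours in $S$. The lexicographic product $G\circ H$ has vertex set $V(G)\times V(H)$, with $(u,v)(x,y)$ an edge iff $ux\in E(G)$, or $u=x$ and $vy\in E(H)$. *)

theory Defs
  imports Main
begin

definition simple_graph :: "'a set \<Rightarrow> ('a \<Rightarrow> 'a \<Rightarrow> bool) \<Rightarrow> bool" where
  "simple_graph V E \<longleftrightarrow> finite V \<and> (\<forall>u v. E u v \<longrightarrow> u \<in> V \<and> v \<in> V)
     \<and> (\<forall>u v. E u v \<longrightarrow> E v u) \<and> (\<forall>v. \<not> E v v)"

definition nbhd :: "'a set \<Rightarrow> ('a \<Rightarrow> 'a \<Rightarrow> bool) \<Rightarrow> 'a \<Rightarrow> 'a set" where
  "nbhd V E v = {u \<in> V. E v u}"

definition no_isolated :: "'a set \<Rightarrow> ('a \<Rightarrow> 'a \<Rightarrow> bool) \<Rightarrow> bool" where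
  "no_isolated V E \<longleftrightarrow> (\<forall>v\<in>V. nbhd V E v \<noteq> {})"

text \<open>w-dominating functions: the vector w = (w_0,...,w_l) is the list w, l = length w - 1.
  Functions are required to vanish outside V.\<close>

definition w_dominating :: "'a set \<Rightarrow> ('a \<Rightarrow> 'a \<Rightarrow> bool) \<Rightarrow> nat list \<Rightarrow> ('a \<Rightarrow> nat) \<Rightarrow> bool" where
  "w_dominating V E w f \<longleftrightarrow> (\<forall>v. v \<notin> V \<longrightarrow> f v = 0)
     \<and> (\<forall>v\<in>V. f v < length w \<and> (\<Sum>u\<in>nbhd V E v. f u) \<ge> w ! (f v))"

definition gamma_w :: "'a set \<Rightarrow> ('a \<Rightarrow> 'a \<Rightarrow> bool) \<Rightarrow> nat list \<Rightarrow> nat" where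
  "gamma_w V E w = (LEAST k. \<exists>f. w_dominating V E w f \<and> (\<Sum>v\<in>V. f v) = k)"

definition italian_domination_number :: "'a set \<Rightarrow> ('a \<Rightarrow> 'a \<Rightarrow> bool) \<Rightarrow> nat" where
  "italian_domination_number V E = gamma_w V E [2, 0, 0]"

definition dominating_set :: "'a set \<Rightarrow> ('a \<Rightarrow> 'a \<Rightarrow> bool) \<Rightarrow> 'a set \<Rightarrow> bool" where
  "dominating_set V E S \<longleftrightarrow> S \<subseteq> V \<and> (\<forall>v\<in>V - S. nbhd V E v \<inter> S \<noteq> {})"

definition domination_number :: "'a set \<Rightarrow> ('a \<Rightarrow> 'a \<Rightarrow> bool) \<Rightarrow> nat" where
  "domination_number V E = (LEAST k. \<exists>S. dominating_set V E S \<and> card S = k)"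

definition two_dominating_set :: "'a set \<Rightarrow> ('a \<Rightarrow> 'a \<Rightarrow> bool) \<Rightarrow> 'a set \<Rightarrow> bool" where
  "two_dominating_set V E S \<longleftrightarrow> S \<subseteq> V \<and> (\<forall>v\<in>V - S. card (nbhd V E v \<inter> S) \<ge> 2)"

definition two_domination_number :: "'a set \<Rightarrow> ('a \<Rightarrow> 'a \<Rightarrow> bool) \<Rightarrow> nat" where
  "two_domination_number V E = (LEAST k. \<exists>S. two_dominating_set V E S \<and> card S = k)"

definition lex_vertices :: "'a set \<Rightarrow> 'b set \<Rightarrow> ('a \<times> 'b) set" where
  "lex_vertices VG VH = VG \<times> VH"

definition lex_edges :: "'a set \<Rightarrow> ('a \<Rightarrow> 'a \<Rightarrow> bool) \<Rightarrow> 'b set \<Rightarrow> ('b \<Rightarrow> 'b \<Rightarrow> bool)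
    \<Rightarrow> ('a \<times> 'b) \<Rightarrow> ('a \<times> 'b) \<Rightarrow> bool" where
  "lex_edges VG EG VH EH p q \<longleftrightarrow> p \<in> VG \<times> VH \<and> q \<in> VG \<times> VH \<and>
     (EG (fst p) (fst q) \<or> (fst p = fst q \<and> EH (snd p) (snd q)))"

end

theory Submission
  imports Defs
begin

lemma least_eq:
  fixes P :: "'f \<Rightarrow> bool" and Q :: "'g \<Rightarrow> bool" and W1 :: "'f \<Rightarrow> nat" and W2 :: "'g \<Rightarrow> nat"
  assumes ex: "\<exists>f. P f"
    and PQ: "\<And>f. P f \<Longrightarrow> \<exists>g. Q g \<and> W2 g \<le> W1 f"
    and QP: "\<And>g. Q g \<Longrightarrow> \<exists>f. P f \<and> W1 f \<le> W2 g"
  shows "(LEAST k. \<exists>f. P f \<and> W1 f = k) = (LEAST k. \<exists>g. Q g \<and> W2 g = k)"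
proof -
  let ?m1 = "LEAST k. \<exists>f. P f \<and> W1 f = k"
  let ?m2 = "LEAST k. \<exists>g. Q g \<and> W2 g = k"
  from ex obtain f0 where "P f0" by blast
  have "\<exists>f. P f \<and> W1 f = ?m1" by (rule LeastI[of _ "W1 f0"]) (use \<open>P f0\<close> in blast)
  then obtain f1 where f1: "P f1" "W1 f1 = ?m1" by blast
  from PQ[OF f1(1)] obtain g1 where g1: "Q g1" "W2 g1 \<le> W1 f1" by blast
  have a: "?m2 \<le> W2 g1" by (rule Least_le) (use g1 in blast)
  have "\<exists>g. Q g \<and> W2 g = ?m2" by (rule LeastI[of _ "W2 g1"]) (use g1 in blast)
  then obtain g2 where g2: "Q g2" "W2 g2 = ?m2" by blast
  from QP[OF g2(1)] obtain f2 where f2: "P f2" "W1 f2 \<le> W2 g2" by blast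
  have b: "?m1 \<le> W1 f2" by (rule Least_le) (use f2 in blast)
  show ?thesis using a b f1 g1 f2 g2 by linarith
qed

lemma dom_attained: "\<exists>S. dominating_set V E S \<and> card S = domination_number V E"
  unfolding domination_number_def by (rule LeastI[of _ "card V"]) (auto simp: dominating_set_def)
lemma dom_le: "dominating_set V E S \<Longrightarrow> domination_number V E \<le> card S"
  unfolding domination_number_def by (rule Least_le) blast
lemma two_dom_attained: "\<exists>S. two_dominating_set V E S \<and> card S = two_domination_number V E"
  unfolding two_domination_number_def by (rule LeastI[of _ "card V"]) (auto simp: two_dominating_set_def)
lemma two_dom_le: "two_dominating_set V E S \<Longrightarrow> two_domination_number V E \<le> card S"
  unfolding two_domination_number_def by (rule Least_le) blast
lemma gw_le: "w_dominating V E w f \<Longrightarrow> gamma_w V E w \<le> (\<Sum>v\<in>V. f v)"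
  unfolding gamma_w_def by (rule Least_le) blast
lemma gw_attained: "w_dominating V E w f0 \<Longrightarrow> \<exists>f. w_dominating V E w f \<and> (\<Sum>v\<in>V. f v) = gamma_w V E w"
  unfolding gamma_w_def by (rule LeastI[of _ "(\<Sum>v\<in>V. f0 v)"]) blast
lemma idf_exists: "w_dominating V E [2,0,0] (\<lambda>v. if v \<in> V then 1 else 0)"
  unfolding w_dominating_def by auto

lemma nbhd_sub: "nbhd V E v \<subseteq> V" by (auto simp: nbhd_def)

lemma summin: "finite A \<Longrightarrow> min (\<Sum>u\<in>A. (a u::nat)) 2 \<le> (\<Sum>u\<in>A. min (a u) 2)"
  by (induction A rule: finite_induct) auto

lemma sum_ind_card:
  fixes h :: "'b \<Rightarrow> nat"
  assumes "finite A" "\<forall>y\<in>A. h y \<le> 1"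
  shows "(\<Sum>y\<in>A. h y) = card {y\<in>A. 0 < h y}"
proof -
  have "(\<Sum>y\<in>A. h y) = (\<Sum>y\<in>A. if 0 < h y then 1 else 0)"
    using assms(2) by (intro sum.cong) auto
  also have "\<dots> = card {y\<in>A. 0 < h y}"
    using assms(1) by (simp add: sum.If_cases Int_def)
  finally show ?thesis .
qed


context
  fixes VH :: "'b set" and EH :: "'b \<Rightarrow> 'b \<Rightarrow> bool" and h :: "'b \<Rightarrow> nat" and s :: nat
  assumes H: "simple_graph VH EH" and nontriv: "card VH \<ge> 2"
    and hz: "\<forall>y. y \<notin> VH \<longrightarrow> h y = 0"
    and A: "\<forall>y\<in>VH. h y = 0 \<longrightarrow> s + (\<Sum>u\<in>nbhd VH EH y. h u) \<ge> 2"
begin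

lemma finVH: "finite VH" using H by (simp add: simple_graph_def)

lemma supp_card: "card {y\<in>VH. 0 < h y} \<le> (\<Sum>y\<in>VH. h y)"
proof -
  let ?S = "{y\<in>VH. 0 < h y}"
  have "card ?S = (\<Sum>y\<in>?S. 1)" by simp
  also have "\<dots> \<le> (\<Sum>y\<in>?S. h y)" by (intro sum_mono) auto
  also have "\<dots> \<le> (\<Sum>y\<in>VH. h y)" using finVH by (intro sum_mono2) auto
  finally show ?thesis .
qed

lemma nb_le: "(\<Sum>u\<in>nbhd VH EH y. h u) \<le> (\<Sum>y\<in>VH. h y)"
  using finVH nbhd_sub[of VH EH y] by (intro sum_mono2) auto

lemma L0: "(\<Sum>y\<in>VH. h y) = 0 \<Longrightarrow> s \<ge> 2"
proof -
  assume T: "(\<Sum>y\<in>VH. h y) = 0"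
  have "VH \<noteq> {}" using nontriv by auto
  then obtain y where y: "y \<in> VH" by blast
  have "h y = 0" using T finVH y by simp
  then have "2 \<le> s + (\<Sum>u\<in>nbhd VH EH y. h u)" using A y by blast
  then show ?thesis using nb_le[of y] T by linarith
qed

lemma L1: "(\<Sum>y\<in>VH. h y) \<le> 1 \<Longrightarrow> s \<ge> 1"
proof -
  assume T: "(\<Sum>y\<in>VH. h y) \<le> 1"
  have "\<exists>y\<in>VH. h y = 0"
  proof (rule ccontr)
    assume "\<not> ?thesis"
    then have "\<forall>y\<in>VH. 1 \<le> h y" by auto
    then have "(\<Sum>y\<in>VH. (1::nat)) \<le> (\<Sum>y\<in>VH. h y)" by (intro sum_mono) auto
    then show False using T nontriv by simp
  qed
  then obtain y where y: "y \<in> VH" "h y = 0" by blast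
  then have "2 \<le> s + (\<Sum>u\<in>nbhd VH EH y. h u)" using A by blast
  then show ?thesis using nb_le[of y] T by linarith
qed

lemma Ldom_set: "s \<le> 1 \<Longrightarrow> dominating_set VH EH {y\<in>VH. 0 < h y}"
  unfolding dominating_set_def
proof (intro conjI ballI)
  fix y assume s: "s \<le> 1" and y: "y \<in> VH - {y\<in>VH. 0 < h y}"
  then have "h y = 0" "y \<in> VH" by auto
  then have "2 \<le> s + (\<Sum>u\<in>nbhd VH EH y. h u)" using A by blast
  then have "(\<Sum>u\<in>nbhd VH EH y. h u) \<noteq> 0" using s by linarith
  then have "\<exists>u\<in>nbhd VH EH y. h u \<noteq> 0" by (meson sum.neutral)
  then obtain u where "u \<in> nbhd VH EH y" "h u \<noteq> 0" by blast
  moreover have "u \<in> VH" using \<open>u \<in> nbhd VH EH y\<close> by (simp add: nbhd_def)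
  ultimately show "nbhd VH EH y \<inter> {y\<in>VH. 0 < h y} \<noteq> {}" by blast
qed simp

lemma Ldom: "s \<le> 1 \<Longrightarrow> domination_number VH EH \<le> (\<Sum>y\<in>VH. h y)"
proof -
  assume "s \<le> 1"
  then have "domination_number VH EH \<le> card {y\<in>VH. 0 < h y}" using Ldom_set dom_le by blast
  then show ?thesis using supp_card by linarith
qed

lemma LI: "s = 0 \<Longrightarrow> (\<forall>y\<in>VH. h y < 3) \<Longrightarrow> italian_domination_number VH EH \<le> (\<Sum>y\<in>VH. h y)"
proof -
  assume s: "s = 0" and h3: "\<forall>y\<in>VH. h y < 3"
  have "w_dominating VH EH [2,0,0] h"
    unfolding w_dominating_def
  proof (intro conjI ballI allI impI)
    fix v assume v: "v \<in> VH"
    have "h v < 3" using h3 v by blast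
    then show "h v < length [2::nat,0,0]" by simp
    have "h v = 0 \<or> h v = 1 \<or> h v = 2" using h3 v by force
    then show "[2::nat,0,0] ! h v \<le> (\<Sum>u\<in>nbhd VH EH v. h u)"
      using A v s by auto
  qed (use hz in auto)
  then show ?thesis unfolding italian_domination_number_def by (rule gw_le)
qed

lemma L2: "s = 0 \<Longrightarrow> (\<Sum>y\<in>VH. h y) = 2 \<Longrightarrow>
   domination_number VH EH \<le> 1 \<or> two_domination_number VH EH \<le> 2"
proof -
  assume s: "s = 0" and T: "(\<Sum>y\<in>VH. h y) = 2"
  show ?thesis
  proof (cases "\<exists>y1\<in>VH. 2 \<le> h y1")
    case True
    then obtain y1 where y1: "y1 \<in> VH" "2 \<le> h y1" by blast
    have "(\<Sum>y\<in>VH. h y) = h y1 + (\<Sum>y\<in>VH - {y1}. h y)"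
      using finVH y1 by (simp add: sum.remove)
    then have "(\<Sum>y\<in>VH - {y1}. h y) = 0" using T y1 by linarith
    then have "\<forall>y\<in>VH - {y1}. h y = 0" using finVH by simp
    then have z: "\<And>x. x \<in> VH \<Longrightarrow> x \<noteq> y1 \<Longrightarrow> h x = 0" by blast
    have "{y\<in>VH. 0 < h y} = {y1}"
    proof (intro equalityI subsetI)
      fix x assume "x \<in> {y\<in>VH. 0 < h y}"
      then have "x \<in> VH" "0 < h x" by auto
      then show "x \<in> {y1}" using z by fastforce
    qed (use y1 in auto)
    then have "domination_number VH EH \<le> card {y1}" using Ldom_set s dom_le by fastforce
    then show ?thesis by simp
  next
    case False
    then have le1: "\<forall>y\<in>VH. h y \<le> 1" by force
    have "two_dominating_set VH EH {y\<in>VH. 0 < h y}"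
      unfolding two_dominating_set_def
    proof (intro conjI ballI)
      fix y assume y: "y \<in> VH - {y\<in>VH. 0 < h y}"
      then have "h y = 0" "y \<in> VH" by auto
      then have "2 \<le> s + (\<Sum>u\<in>nbhd VH EH y. h u)" using A by blast
      then have "2 \<le> (\<Sum>u\<in>nbhd VH EH y. h u)" using s by linarith
      also have "\<dots> = card {u\<in>nbhd VH EH y. 0 < h u}"
        using le1 nbhd_sub[of VH EH y] finite_subset[OF nbhd_sub finVH]
        by (intro sum_ind_card) auto
      also have "{u\<in>nbhd VH EH y. 0 < h u} = nbhd VH EH y \<inter> {y\<in>VH. 0 < h y}"
        using nbhd_sub[of VH EH y] by auto
      finally show "2 \<le> card (nbhd VH EH y \<inter> {y\<in>VH. 0 < h y})" .
    qed auto
    moreover have "card {y\<in>VH. 0 < h y} = 2"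
      using sum_ind_card[OF finVH le1] T by simp
    ultimately show ?thesis using two_dom_le by force
  qed
qed

lemma loc_i: "[2,1,0] ! (min (\<Sum>y\<in>VH. h y) 2) \<le> s \<or>
   (2 \<le> (\<Sum>y\<in>VH. h y) \<and> [2,1,0] ! (min (\<Sum>y\<in>VH. h y) 2) \<le> s + (\<Sum>y\<in>VH. h y) - 2)"
proof -
  have "(\<Sum>y\<in>VH. h y) = 0 \<or> (\<Sum>y\<in>VH. h y) = 1 \<or> (\<Sum>y\<in>VH. h y) \<ge> 2" by arith
  then show ?thesis
  proof (elim disjE)
    assume T: "(\<Sum>y\<in>VH. h y) = 0" then show ?thesis using L0 by simp
  next
    assume T: "(\<Sum>y\<in>VH. h y) = 1" then show ?thesis using L1 by simp
  next
    assume T: "(\<Sum>y\<in>VH. h y) \<ge> 2" then have "min (\<Sum>y\<in>VH. h y) 2 = 2" by simp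
    then show ?thesis by simp
  qed
qed

lemma T1_s2: "domination_number VH EH \<ge> 2 \<Longrightarrow> (\<Sum>y\<in>VH. h y) = 1 \<Longrightarrow> s \<ge> 2"
proof (rule ccontr)
  assume "domination_number VH EH \<ge> 2" "(\<Sum>y\<in>VH. h y) = 1" "\<not> s \<ge> 2"
  then show False using Ldom by fastforce
qed

lemma loc_ii: "domination_number VH EH = 2 \<Longrightarrow> [2,2,0] ! (min (\<Sum>y\<in>VH. h y) 2) \<le> s \<or>
   (2 \<le> (\<Sum>y\<in>VH. h y) \<and> [2,2,0] ! (min (\<Sum>y\<in>VH. h y) 2) \<le> s + (\<Sum>y\<in>VH. h y) - 2)"
proof -
  assume d: "domination_number VH EH = 2"
  have "(\<Sum>y\<in>VH. h y) = 0 \<or> (\<Sum>y\<in>VH. h y) = 1 \<or> (\<Sum>y\<in>VH. h y) \<ge> 2" by arith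
  then show ?thesis
  proof (elim disjE)
    assume T: "(\<Sum>y\<in>VH. h y) = 0" then show ?thesis using L0 by simp
  next
    assume T: "(\<Sum>y\<in>VH. h y) = 1" then show ?thesis using T1_s2 d by simp
  next
    assume T: "(\<Sum>y\<in>VH. h y) \<ge> 2" then have "min (\<Sum>y\<in>VH. h y) 2 = 2" by simp
    then show ?thesis by simp
  qed
qed

lemma loc_iii: "domination_number VH EH = 2 \<Longrightarrow> italian_domination_number VH EH \<ge> 3 \<Longrightarrow>
   (\<forall>y\<in>VH. h y < 3) \<Longrightarrow> [2,2,1] ! (min (\<Sum>y\<in>VH. h y) 2) \<le> s \<or>
   (2 \<le> (\<Sum>y\<in>VH. h y) \<and> [2,2,1] ! (min (\<Sum>y\<in>VH. h y) 2) \<le> s + (\<Sum>y\<in>VH. h y) - 2)"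
proof -
  assume d: "domination_number VH EH = 2" and I: "italian_domination_number VH EH \<ge> 3"
    and h3: "\<forall>y\<in>VH. h y < 3"
  have "(\<Sum>y\<in>VH. h y) = 0 \<or> (\<Sum>y\<in>VH. h y) = 1 \<or> (\<Sum>y\<in>VH. h y) \<ge> 2" by arith
  then show ?thesis
  proof (elim disjE)
    assume T: "(\<Sum>y\<in>VH. h y) = 0" then show ?thesis using L0 by simp
  next
    assume T: "(\<Sum>y\<in>VH. h y) = 1" then show ?thesis using T1_s2 d by simp
  next
    assume T: "(\<Sum>y\<in>VH. h y) \<ge> 2" then have m: "min (\<Sum>y\<in>VH. h y) 2 = 2" by simp
    show ?thesis
    proof (cases "s = 0")
      case True
      then have "(\<Sum>y\<in>VH. h y) \<ge> 3" using LI h3 I by fastforce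
      then show ?thesis using m True by simp
    next
      case False
      then show ?thesis using m by simp
    qed
  qed
qed

lemma loc_iv: "domination_number VH EH \<ge> 3 \<Longrightarrow> italian_domination_number VH EH \<ge> 4 \<Longrightarrow>
   (\<forall>y\<in>VH. h y < 3) \<Longrightarrow> [2,2,2] ! (min (\<Sum>y\<in>VH. h y) 2) \<le> s \<or>
   (2 \<le> (\<Sum>y\<in>VH. h y) \<and> [2,2,2] ! (min (\<Sum>y\<in>VH. h y) 2) \<le> s + (\<Sum>y\<in>VH. h y) - 2)"
proof -
  assume d: "domination_number VH EH \<ge> 3" and I: "italian_domination_number VH EH \<ge> 4"
    and h3: "\<forall>y\<in>VH. h y < 3"
  have "(\<Sum>y\<in>VH. h y) = 0 \<or> (\<Sum>y\<in>VH. h y) = 1 \<or> (\<Sum>y\<in>VH. h y) \<ge> 2" by arith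
  then show ?thesis
  proof (elim disjE)
    assume T: "(\<Sum>y\<in>VH. h y) = 0" then show ?thesis using L0 by simp
  next
    assume T: "(\<Sum>y\<in>VH. h y) = 1" then show ?thesis using T1_s2 d by simp
  next
    assume T: "(\<Sum>y\<in>VH. h y) \<ge> 2" then have m: "min (\<Sum>y\<in>VH. h y) 2 = 2" by simp
    have "s = 0 \<or> s = 1 \<or> s \<ge> 2" by arith
    then show ?thesis
    proof (elim disjE)
      assume s0: "s = 0"
      then have "(\<Sum>y\<in>VH. h y) \<ge> 4" using LI h3 I by fastforce
      then show ?thesis using m s0 by simp
    next
      assume s1: "s = 1"
      then have "(\<Sum>y\<in>VH. h y) \<ge> 3" using Ldom d by fastforce
      then show ?thesis using m s1 by simp
    next
      assume "s \<ge> 2" then show ?thesis using m by simp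
    qed
  qed
qed

end


lemma idf_hyps:
  assumes "w_dominating V E [2,0,0] h"
  shows "\<forall>y. y \<notin> V \<longrightarrow> h y = 0" "\<forall>y\<in>V. h y = 0 \<longrightarrow> 0 + (\<Sum>u\<in>nbhd V E y. h u) \<ge> 2"
    "\<forall>y\<in>V. h y < 3"
  using assms unfolding w_dominating_def by auto

lemma idf_att:
  "\<exists>h. w_dominating V E [2,0,0] h \<and> (\<Sum>v\<in>V. h v) = italian_domination_number V E"
  using gw_attained[OF idf_exists] unfolding italian_domination_number_def by blast

lemma Hiii:
  assumes H: "simple_graph VH EH" and nt: "card VH \<ge> 2" and d2: "domination_number VH EH = 2"
    and t2: "two_domination_number VH EH > 2"
  shows "italian_domination_number VH EH \<ge> 3"
proof -
  obtain h where h: "w_dominating VH EH [2,0,0] h" "(\<Sum>v\<in>VH. h v) = italian_domination_number VH EH"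
    using idf_att by blast
  note hy = idf_hyps[OF h(1)]
  show ?thesis
  proof (rule ccontr)
    assume "\<not> ?thesis"
    then have "(\<Sum>v\<in>VH. h v) = 0 \<or> (\<Sum>v\<in>VH. h v) = 1 \<or> (\<Sum>v\<in>VH. h v) = 2" using h(2) by linarith
    then show False
    proof (elim disjE)
      assume "(\<Sum>v\<in>VH. h v) = 0"
      from L0[OF H nt hy(1) hy(2) this] show False by simp
    next
      assume "(\<Sum>v\<in>VH. h v) = 1"
      then have "(\<Sum>v\<in>VH. h v) \<le> 1" by simp
      from L1[OF H nt hy(1) hy(2) this] show False by simp
    next
      assume "(\<Sum>v\<in>VH. h v) = 2"
      from L2[OF H nt hy(1) hy(2) refl this] show False using d2 t2 by linarith
    qed
  qed
qed

lemma Hiv: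
  assumes H: "simple_graph VH EH" and nt: "card VH \<ge> 2" and d3: "domination_number VH EH \<ge> 3"
    and cond: "italian_domination_number VH EH \<noteq> 3 \<or> domination_number VH EH \<noteq> 3"
  shows "italian_domination_number VH EH \<ge> 4"
proof -
  obtain h where h: "w_dominating VH EH [2,0,0] h" "(\<Sum>v\<in>VH. h v) = italian_domination_number VH EH"
    using idf_att by blast
  note hy = idf_hyps[OF h(1)]
  have "domination_number VH EH \<le> (\<Sum>v\<in>VH. h v)"
    by (rule Ldom[OF H nt hy(1) hy(2)]) simp
  then show ?thesis using h(2) d3 cond by linarith
qed


lemma nbhd_lex:
  assumes G: "simple_graph VG EG" and H: "simple_graph VH EH" and xy: "x \<in> VG" "y \<in> VH"
  shows "nbhd (lex_vertices VG VH) (lex_edges VG EG VH EH) (x, y)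
     = nbhd VG EG x \<times> VH \<union> {x} \<times> nbhd VH EH y"
  using xy G H unfolding nbhd_def lex_vertices_def lex_edges_def simple_graph_def by auto

lemma sum_nbhd_lex:
  fixes f :: "'a \<times> 'b \<Rightarrow> nat"
  assumes G: "simple_graph VG EG" and H: "simple_graph VH EH" and xy: "x \<in> VG" "y \<in> VH"
  shows "(\<Sum>p\<in>nbhd (lex_vertices VG VH) (lex_edges VG EG VH EH) (x, y). f p)
     = (\<Sum>u\<in>nbhd VG EG x. \<Sum>y'\<in>VH. f (u, y')) + (\<Sum>y'\<in>nbhd VH EH y. f (x, y'))"
proof -
  have fG: "finite VG" and fH: "finite VH" using G H by (auto simp: simple_graph_def)
  have fN: "finite (nbhd VG EG x)" using finite_subset[OF nbhd_sub fG] .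
  have fNH: "finite (nbhd VH EH y)" using finite_subset[OF nbhd_sub fH] .
  have disj: "(nbhd VG EG x \<times> VH) \<inter> ({x} \<times> nbhd VH EH y) = {}"
    using G unfolding nbhd_def simple_graph_def by auto
  have "(\<Sum>p\<in>nbhd (lex_vertices VG VH) (lex_edges VG EG VH EH) (x, y). f p)
      = (\<Sum>p\<in>nbhd VG EG x \<times> VH. f p) + (\<Sum>p\<in>{x} \<times> nbhd VH EH y. f p)"
    unfolding nbhd_lex[OF G H xy] using fN fH fNH disj by (intro sum.union_disjoint) auto
  also have "(\<Sum>p\<in>nbhd VG EG x \<times> VH. f p) = (\<Sum>u\<in>nbhd VG EG x. \<Sum>y'\<in>VH. f (u, y'))"
    by (simp add: sum.cartesian_product)
  also have "(\<Sum>p\<in>{x} \<times> nbhd VH EH y. f p) = (\<Sum>y'\<in>nbhd VH EH y. f (x, y'))"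
  proof -
    have "{x} \<times> nbhd VH EH y = (\<lambda>y'. (x, y')) ` nbhd VH EH y" by auto
    moreover have "inj_on (\<lambda>y'. (x, y')) (nbhd VH EH y)" by (simp add: inj_on_def)
    ultimately show ?thesis by (simp add: sum.reindex)
  qed
  finally show ?thesis .
qed

lemma sum_lex:
  fixes f :: "'a \<times> 'b \<Rightarrow> nat"
  shows "(\<Sum>p\<in>lex_vertices VG VH. f p) = (\<Sum>x\<in>VG. \<Sum>y\<in>VH. f (x, y))"
  unfolding lex_vertices_def by (simp add: sum.cartesian_product)

lemma w_mono3:
  fixes w :: "nat list"
  assumes "length w = 3" "w!1 \<le> w!0" "w!2 \<le> w!1" "i \<le> j" "j < 3"
  shows "w!j \<le> w!i"
proof -
  have "i = 0 \<and> j = 0 \<or> i = 0 \<and> j = 1 \<or> i = 0 \<and> j = 2 \<or> i = 1 \<and> j = 1 \<or> i = 1 \<and> j = 2 \<or> i = 2 \<and> j = 2"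
    using assms(4,5) by arith
  then show ?thesis using assms(2,3) by (elim disjE) auto
qed

lemma G_lower:
  fixes F :: "'a \<Rightarrow> nat"
  assumes G: "simple_graph VG EG" and noiso: "no_isolated VG EG"
    and wl: "length w = 3" and wm: "w!1 \<le> w!0" "w!2 \<le> w!1" and w2: "w!0 \<le> 2"
    and ok: "\<forall>x\<in>VG. w!(min (F x) 2) \<le> (\<Sum>u\<in>nbhd VG EG x. F u) \<or>
       (2 \<le> F x \<and> w!(min (F x) 2) \<le> (\<Sum>u\<in>nbhd VG EG x. F u) + F x - 2)"
  shows "\<exists>g. w_dominating VG EG w g \<and> (\<Sum>x\<in>VG. g x) \<le> (\<Sum>x\<in>VG. F x)"
proof -
  have fG: "finite VG" using G by (simp add: simple_graph_def)
  define sx where "sx x = (\<Sum>u\<in>nbhd VG EG x. F u)" for x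
  define B where "B = {x\<in>VG. \<not> w!(min (F x) 2) \<le> sx x}"
  have B: "\<And>x. x \<in> B \<Longrightarrow> x \<in> VG \<and> 2 \<le> F x \<and> w!(min (F x) 2) \<le> sx x + F x - 2"
    using ok unfolding B_def sx_def by auto
  have fB: "finite B" using fG unfolding B_def by simp
  define c where "c x = (SOME u. u \<in> nbhd VG EG x)" for x
  have c: "\<And>x. x \<in> VG \<Longrightarrow> c x \<in> nbhd VG EG x"
    using noiso unfolding no_isolated_def c_def by (metis some_in_eq)
  define ad where "ad u = (\<Sum>x\<in>{x\<in>B. c x = u}. F x - 2)" for u
  define g where "g u = (if u \<in> VG then min (F u + ad u) 2 else 0)" for u
  have wle2: "\<And>i. i < 3 \<Longrightarrow> w!i \<le> 2"
  proof -
    fix i :: nat assume "i < 3"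
    then have "w!i \<le> w!0" using w_mono3[OF wl wm, of 0 i] by simp
    then show "w!i \<le> 2" using w2 by simp
  qed
  have wd: "w_dominating VG EG w g"
    unfolding w_dominating_def
  proof (intro conjI allI impI ballI)
    fix v assume "v \<notin> VG" then show "g v = 0" by (simp add: g_def)
  next
    fix v assume v: "v \<in> VG"
    show "g v < length w" using wl v by (simp add: g_def)
    have fN: "finite (nbhd VG EG v)" using finite_subset[OF nbhd_sub fG] .
    have sN: "(\<Sum>u\<in>nbhd VG EG v. g u) = (\<Sum>u\<in>nbhd VG EG v. min (F u + ad u) 2)"
      by (intro sum.cong) (auto simp: g_def nbhd_def)
    have m1: "min (\<Sum>u\<in>nbhd VG EG v. F u + ad u) 2 \<le> (\<Sum>u\<in>nbhd VG EG v. g u)"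
      unfolding sN by (rule summin[OF fN])
    have gv: "min (F v) 2 \<le> g v" "g v < 3" using v by (auto simp: g_def)
    have "w!(g v) \<le> w!(min (F v) 2)" by (rule w_mono3[OF wl wm gv])
    moreover have "w!(min (F v) 2) \<le> min (\<Sum>u\<in>nbhd VG EG v. F u + ad u) 2"
    proof (cases "v \<in> B")
      case False
      then have "w!(min (F v) 2) \<le> sx v" using v unfolding B_def by auto
      moreover have "sx v \<le> (\<Sum>u\<in>nbhd VG EG v. F u + ad u)"
        unfolding sx_def by (intro sum_mono) auto
      moreover have "w!(min (F v) 2) \<le> 2" using wle2 by simp
      ultimately show ?thesis by linarith
    next
      case True
      have cv: "c v \<in> nbhd VG EG v" using c v .
      have fib: "finite {x\<in>B. c x = c v}" using fB by simp
      have "F v - 2 \<le> ad (c v)" unfolding ad_def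
        using member_le_sum[OF _ _ fib, of v "\<lambda>x. F x - 2"] True by simp
      also have "ad (c v) \<le> (\<Sum>u\<in>nbhd VG EG v. ad u)"
        using member_le_sum[OF cv _ fN, of ad] by simp
      finally have "sx v + (F v - 2) \<le> (\<Sum>u\<in>nbhd VG EG v. F u + ad u)"
        unfolding sx_def sum.distrib by linarith
      moreover have "w!(min (F v) 2) \<le> sx v + F v - 2" "2 \<le> F v" using B[OF True] by auto
      moreover have "w!(min (F v) 2) \<le> 2" using wle2 by simp
      ultimately show ?thesis by linarith
    qed
    ultimately show "w ! g v \<le> (\<Sum>u\<in>nbhd VG EG v. g u)" using m1 by linarith
  qed
  have "(\<Sum>x\<in>VG. g x) \<le> (\<Sum>x\<in>VG. min (F x) 2 + ad x)"
    by (intro sum_mono) (auto simp: g_def)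
  also have "\<dots> = (\<Sum>x\<in>VG. min (F x) 2) + (\<Sum>x\<in>VG. ad x)" by (simp add: sum.distrib)
  finally have w1: "(\<Sum>x\<in>VG. g x) \<le> (\<Sum>x\<in>VG. min (F x) 2) + (\<Sum>x\<in>VG. ad x)" .
  have "(\<Sum>x\<in>VG. ad x) = (\<Sum>x\<in>B. F x - 2)"
  proof -
    have "c ` B \<subseteq> VG"
    proof
      fix u assume "u \<in> c ` B"
      then obtain x where "x \<in> B" "u = c x" by blast
      then show "u \<in> VG" using c[of x] B[of x] by (auto simp: nbhd_def)
    qed
    then show ?thesis unfolding ad_def using sum.group[OF fB fG, of c "\<lambda>x. F x - 2"] by simp
  qed
  also have "(\<Sum>x\<in>B. F x - 2) = (\<Sum>x\<in>B. F x - min (F x) 2)"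
    using B by (intro sum.cong) auto
  also have "\<dots> \<le> (\<Sum>x\<in>VG. F x - min (F x) 2)"
    using fG B by (intro sum_mono2) auto
  finally have w2: "(\<Sum>x\<in>VG. ad x) \<le> (\<Sum>x\<in>VG. F x - min (F x) 2)" .
  have w3: "(\<Sum>x\<in>VG. min (F x) 2) + (\<Sum>x\<in>VG. F x - min (F x) 2) = (\<Sum>x\<in>VG. F x)"
    by (simp add: sum.distrib[symmetric])
  show ?thesis using wd w1 w2 w3 by (intro exI[of _ g]) linarith
qed


lemma gw_eq:
  assumes ex: "\<exists>f. w_dominating V1 E1 w1 f"
    and PQ: "\<And>f. w_dominating V1 E1 w1 f \<Longrightarrow> \<exists>g. w_dominating V2 E2 w2 g \<and> (\<Sum>v\<in>V2. g v) \<le> (\<Sum>v\<in>V1. f v)"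
    and QP: "\<And>g. w_dominating V2 E2 w2 g \<Longrightarrow> \<exists>f. w_dominating V1 E1 w1 f \<and> (\<Sum>v\<in>V1. f v) \<le> (\<Sum>v\<in>V2. g v)"
  shows "gamma_w V1 E1 w1 = gamma_w V2 E2 w2"
  unfolding gamma_w_def by (rule least_eq[OF ex PQ QP])

lemma G_upper:
  fixes P :: "nat \<Rightarrow> 'b \<Rightarrow> nat" and g :: "'a \<Rightarrow> nat" and w :: "nat list"
  assumes G: "simple_graph VG EG" and H: "simple_graph VH EH"
    and Ps: "\<And>k. k < 3 \<Longrightarrow> (\<Sum>y\<in>VH. P k y) = k"
    and P3: "\<And>k y. k < 3 \<Longrightarrow> P k y < 3"
    and Pz: "\<And>k y. k < 3 \<Longrightarrow> y \<notin> VH \<Longrightarrow> P k y = 0"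
    and Pw: "\<And>k y. k < 3 \<Longrightarrow> y \<in> VH \<Longrightarrow> P k y = 0 \<Longrightarrow> w!k + (\<Sum>u\<in>nbhd VH EH y. P k u) \<ge> 2"
    and wl: "length w = 3"
    and gd: "w_dominating VG EG w g"
  shows "\<exists>f. w_dominating (lex_vertices VG VH) (lex_edges VG EG VH EH) [2,0,0] f
     \<and> (\<Sum>v\<in>lex_vertices VG VH. f v) \<le> (\<Sum>x\<in>VG. g x)"
proof -
  have gz: "\<And>x. x \<notin> VG \<Longrightarrow> g x = 0" using gd unfolding w_dominating_def by blast
  have g3: "\<And>x. g x < 3" using gd wl unfolding w_dominating_def by (metis zero_less_numeral)
  have gw: "\<And>x. x \<in> VG \<Longrightarrow> w!(g x) \<le> (\<Sum>u\<in>nbhd VG EG x. g u)"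
    using gd unfolding w_dominating_def by blast
  define f where "f p = (if fst p \<in> VG then P (g (fst p)) (snd p) else 0)" for p
  have fs: "\<And>u. u \<in> VG \<Longrightarrow> (\<Sum>y\<in>VH. f (u, y)) = g u"
    unfolding f_def using Ps g3 by simp
  have wd: "w_dominating (lex_vertices VG VH) (lex_edges VG EG VH EH) [2,0,0] f"
    unfolding w_dominating_def
  proof (intro conjI allI impI ballI)
    fix p assume p: "p \<notin> lex_vertices VG VH"
    show "f p = 0"
    proof (cases "fst p \<in> VG")
      case True
      then have "snd p \<notin> VH" using p unfolding lex_vertices_def by (cases p) auto
      then show ?thesis using True Pz g3 unfolding f_def by simp
    qed (simp add: f_def)
  next
    fix p assume p: "p \<in> lex_vertices VG VH"
    then obtain x y where xy: "p = (x, y)" "x \<in> VG" "y \<in> VH" unfolding lex_vertices_def by auto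
    have fp: "f p = P (g x) y" using xy unfolding f_def by simp
    have "f p < 3" using fp P3[OF g3] by simp
    then show "f p < length [2::nat, 0, 0]" by simp
    show "[2::nat, 0, 0] ! f p \<le> (\<Sum>q\<in>nbhd (lex_vertices VG VH) (lex_edges VG EG VH EH) p. f q)"
    proof (cases "f p = 0")
      case False
      have "f p < 3" using fp P3[OF g3] by simp
      then have "f p = 1 \<or> f p = 2" using False by arith
      then show ?thesis by auto
    next
      case True
      have "(\<Sum>q\<in>nbhd (lex_vertices VG VH) (lex_edges VG EG VH EH) p. f q)
          = (\<Sum>u\<in>nbhd VG EG x. \<Sum>y'\<in>VH. f (u, y')) + (\<Sum>y'\<in>nbhd VH EH y. f (x, y'))"
        unfolding xy(1) by (rule sum_nbhd_lex[OF G H xy(2,3)])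
      also have "(\<Sum>u\<in>nbhd VG EG x. \<Sum>y'\<in>VH. f (u, y')) = (\<Sum>u\<in>nbhd VG EG x. g u)"
        by (intro sum.cong) (auto simp: fs nbhd_def)
      also have "(\<Sum>y'\<in>nbhd VH EH y. f (x, y')) = (\<Sum>y'\<in>nbhd VH EH y. P (g x) y')"
        using xy by (simp add: f_def)
      finally have eq: "(\<Sum>q\<in>nbhd (lex_vertices VG VH) (lex_edges VG EG VH EH) p. f q)
          = (\<Sum>u\<in>nbhd VG EG x. g u) + (\<Sum>y'\<in>nbhd VH EH y. P (g x) y')" .
      have "w!(g x) + (\<Sum>y'\<in>nbhd VH EH y. P (g x) y') \<ge> 2"
        using Pw[OF g3 xy(3)] True fp by simp
      then show ?thesis using eq gw[OF xy(2)] True by simp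
    qed
  qed
  have "(\<Sum>v\<in>lex_vertices VG VH. f v) = (\<Sum>x\<in>VG. g x)"
    unfolding sum_lex using fs by simp
  then show ?thesis using wd by auto
qed

lemma lower_generic:
  fixes w :: "nat list" and f :: "'a \<times> 'b \<Rightarrow> nat"
  assumes G: "simple_graph VG EG" and noiso: "no_isolated VG EG" and H: "simple_graph VH EH"
    and wl: "length w = 3" and wm: "w!1 \<le> w!0" "w!2 \<le> w!1" and w2: "w!0 \<le> 2"
    and loc: "\<And>h s. (\<forall>y. y \<notin> VH \<longrightarrow> h y = 0) \<Longrightarrow>
        (\<forall>y\<in>VH. h y = 0 \<longrightarrow> s + (\<Sum>u\<in>nbhd VH EH y. h u) \<ge> 2) \<Longrightarrow> (\<forall>y\<in>VH. h y < 3) \<Longrightarrow>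
        w!(min (\<Sum>y\<in>VH. h y) 2) \<le> s \<or>
        (2 \<le> (\<Sum>y\<in>VH. h y) \<and> w!(min (\<Sum>y\<in>VH. h y) 2) \<le> s + (\<Sum>y\<in>VH. h y) - 2)"
    and fd: "w_dominating (lex_vertices VG VH) (lex_edges VG EG VH EH) [2,0,0] f"
  shows "\<exists>g. w_dominating VG EG w g \<and> (\<Sum>x\<in>VG. g x) \<le> (\<Sum>v\<in>lex_vertices VG VH. f v)"
proof -
  define F where "F x = (\<Sum>y\<in>VH. f (x, y))" for x
  have fz: "\<And>p. p \<notin> VG \<times> VH \<Longrightarrow> f p = 0" using fd unfolding w_dominating_def lex_vertices_def by blast
  have f3: "\<And>p. p \<in> VG \<times> VH \<Longrightarrow> f p < 3" using fd unfolding w_dominating_def lex_vertices_def by force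
  have fn: "\<And>p. p \<in> VG \<times> VH \<Longrightarrow> [2,0,0] ! (f p) \<le> (\<Sum>q\<in>nbhd (lex_vertices VG VH) (lex_edges VG EG VH EH) p. f q)"
    using fd unfolding w_dominating_def lex_vertices_def by blast
  have ok: "\<forall>x\<in>VG. w!(min (F x) 2) \<le> (\<Sum>u\<in>nbhd VG EG x. F u) \<or>
       (2 \<le> F x \<and> w!(min (F x) 2) \<le> (\<Sum>u\<in>nbhd VG EG x. F u) + F x - 2)"
  proof
    fix x assume x: "x \<in> VG"
    have hz: "\<forall>y. y \<notin> VH \<longrightarrow> f (x, y) = 0" using fz by auto
    have h3: "\<forall>y\<in>VH. f (x, y) < 3" using f3 x by auto
    have A: "\<forall>y\<in>VH. f (x, y) = 0 \<longrightarrow> (\<Sum>u\<in>nbhd VG EG x. F u) + (\<Sum>u\<in>nbhd VH EH y. f (x, u)) \<ge> 2"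
    proof (intro ballI impI)
      fix y assume y: "y \<in> VH" and z: "f (x, y) = 0"
      have "[2::nat,0,0] ! (f (x, y)) \<le> (\<Sum>q\<in>nbhd (lex_vertices VG VH) (lex_edges VG EG VH EH) (x, y). f q)"
        using fn x y by blast
      then show "(\<Sum>u\<in>nbhd VG EG x. F u) + (\<Sum>u\<in>nbhd VH EH y. f (x, u)) \<ge> 2"
        unfolding sum_nbhd_lex[OF G H x y] F_def using z by simp
    qed
    show "w!(min (F x) 2) \<le> (\<Sum>u\<in>nbhd VG EG x. F u) \<or>
       (2 \<le> F x \<and> w!(min (F x) 2) \<le> (\<Sum>u\<in>nbhd VG EG x. F u) + F x - 2)"
      using loc[of "\<lambda>y. f (x, y)", OF hz A h3] unfolding F_def .
  qed
  obtain g where g: "w_dominating VG EG w g" "(\<Sum>x\<in>VG. g x) \<le> (\<Sum>x\<in>VG. F x)"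
    using G_lower[OF G noiso wl wm w2 ok] by blast
  have "(\<Sum>x\<in>VG. F x) = (\<Sum>v\<in>lex_vertices VG VH. f v)" unfolding sum_lex F_def ..
  then show ?thesis using g by auto
qed


lemma upper_single:
  fixes w :: "nat list" and g :: "'a \<Rightarrow> nat"
  assumes G: "simple_graph VG EG" and H: "simple_graph VH EH" and wl: "length w = 3"
    and ys: "ys \<in> VH"
    and cond: "\<And>k y. 0 < k \<Longrightarrow> k < 3 \<Longrightarrow> y \<in> VH \<Longrightarrow> y \<noteq> ys \<Longrightarrow>
        w!k + (if ys \<in> nbhd VH EH y then k else 0) \<ge> 2"
    and w0: "w!0 = 2"
    and gd: "w_dominating VG EG w g"
  shows "\<exists>f. w_dominating (lex_vertices VG VH) (lex_edges VG EG VH EH) [2,0,0] f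
     \<and> (\<Sum>v\<in>lex_vertices VG VH. f v) \<le> (\<Sum>x\<in>VG. g x)"
proof (rule G_upper[OF G H _ _ _ _ wl gd, of "\<lambda>k y. if y = ys then k else 0"])
  have fH: "finite VH" using H by (simp add: simple_graph_def)
  show "\<And>(k::nat). k < 3 \<Longrightarrow> (\<Sum>y\<in>VH. if y = ys then k else 0) = k" using fH ys by simp
  show "\<And>(k::nat) y. k < 3 \<Longrightarrow> (if y = ys then k else 0) < 3" by simp
  show "\<And>(k::nat) y. k < 3 \<Longrightarrow> y \<notin> VH \<Longrightarrow> (if y = ys then k else 0) = 0" using ys by auto
  fix k :: nat and y assume k: "k < 3" and y: "y \<in> VH" and z: "(if y = ys then k else 0) = 0"
  show "w!k + (\<Sum>u\<in>nbhd VH EH y. if u = ys then k else 0) \<ge> 2"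
  proof (cases "k = 0")
    case True then show ?thesis using w0 by simp
  next
    case False
    then have yn: "y \<noteq> ys" using z by auto
    have fN: "finite (nbhd VH EH y)" using finite_subset[OF nbhd_sub fH] .
    have "(if ys \<in> nbhd VH EH y then k else 0) \<le> (\<Sum>u\<in>nbhd VH EH y. if u = ys then k else 0)"
      using fN by simp
    then show ?thesis using cond[OF _ k y yn] False by fastforce
  qed
qed

lemma upper_ab:
  fixes w :: "nat list" and g :: "'a \<Rightarrow> nat"
  assumes G: "simple_graph VG EG" and H: "simple_graph VH EH" and wl: "length w = 3"
    and ab: "a \<in> VH" "b \<in> VH" "a \<noteq> b"
    and cond: "\<And>y. y \<in> VH \<Longrightarrow> y \<notin> {a, b} \<Longrightarrow> w!2 + card (nbhd VH EH y \<inter> {a, b}) \<ge> 2"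
    and w0: "w!0 = 2" and w1: "w!1 = 2"
    and gd: "w_dominating VG EG w g"
  shows "\<exists>f. w_dominating (lex_vertices VG VH) (lex_edges VG EG VH EH) [2,0,0] f
     \<and> (\<Sum>v\<in>lex_vertices VG VH. f v) \<le> (\<Sum>x\<in>VG. g x)"
proof (rule G_upper[OF G H _ _ _ _ wl gd, of "\<lambda>k y. if y = a \<and> 1 \<le> k then 1 else if y = b \<and> k = 2 then 1 else 0"])
  have fH: "finite VH" using H by (simp add: simple_graph_def)
  let ?P = "\<lambda>k y. if y = a \<and> 1 \<le> k then 1 else if y = b \<and> k = 2 then 1 else (0::nat)"
  have red: "(\<Sum>y\<in>VH. ?P k y) = (\<Sum>y\<in>{a,b}. ?P k y)" for k :: nat
    using fH ab by (intro sum.mono_neutral_right) auto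
  show "\<And>(k::nat). k < 3 \<Longrightarrow> (\<Sum>y\<in>VH. ?P k y) = k"
  proof -
    fix k :: nat assume "k < 3"
    then have "k = 0 \<or> k = 1 \<or> k = 2" by arith
    then show "(\<Sum>y\<in>VH. ?P k y) = k" unfolding red using ab(3) by auto
  qed
  show "\<And>(k::nat) y. k < 3 \<Longrightarrow> ?P k y < 3" by simp
  show "\<And>(k::nat) y. k < 3 \<Longrightarrow> y \<notin> VH \<Longrightarrow> ?P k y = 0" using ab by auto
  fix k :: nat and y assume k: "k < 3" and y: "y \<in> VH" and z: "?P k y = 0"
  have "k = 0 \<or> k = 1 \<or> k = 2" using k by arith
  then show "w!k + (\<Sum>u\<in>nbhd VH EH y. ?P k u) \<ge> 2"
  proof (elim disjE)
    assume "k = 0" then show ?thesis using w0 by simp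
  next
    assume "k = 1" then show ?thesis using w1 by simp
  next
    assume k2: "k = 2"
    then have yab: "y \<notin> {a, b}" using z by (auto split: if_splits)
    have fN: "finite (nbhd VH EH y)" using finite_subset[OF nbhd_sub fH] .
    have "card (nbhd VH EH y \<inter> {a, b}) = (\<Sum>u\<in>nbhd VH EH y \<inter> {a, b}. ?P k u)"
    proof -
      have "(\<Sum>u\<in>nbhd VH EH y \<inter> {a, b}. ?P k u) = (\<Sum>u\<in>nbhd VH EH y \<inter> {a, b}. 1)"
        using k2 by (intro sum.cong) auto
      then show ?thesis by simp
    qed
    also have "\<dots> \<le> (\<Sum>u\<in>nbhd VH EH y. ?P k u)"
      using fN by (intro sum_mono2) auto
    finally have "card (nbhd VH EH y \<inter> {a, b}) \<le> (\<Sum>u\<in>nbhd VH EH y. ?P k u)" .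
    moreover have "w!k = w!2" using k2 by simp
    ultimately show ?thesis using cond[OF y yab] by linarith
  qed
qed


theorem theorem2:
  fixes VG :: "'a set" and EG :: "'a \<Rightarrow> 'a \<Rightarrow> bool"
    and VH :: "'b set" and EH :: "'b \<Rightarrow> 'b \<Rightarrow> bool"
  assumes G: "simple_graph VG EG" and noiso: "no_isolated VG EG"
    and H: "simple_graph VH EH" and nontriv: "card VH \<ge> 2"
    and cond: "italian_domination_number VH EH \<noteq> 3 \<or> domination_number VH EH \<noteq> 3"
  shows
   "(domination_number VH EH = 1 \<longrightarrow>
      italian_domination_number (lex_vertices VG VH) (lex_edges VG EG VH EH) = gamma_w VG EG [2, 1, 0])
  \<and> (two_domination_number VH EH = 2 \<and> domination_number VH EH = 2 \<longrightarrow>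
      italian_domination_number (lex_vertices VG VH) (lex_edges VG EG VH EH) = gamma_w VG EG [2, 2, 0])
  \<and> (two_domination_number VH EH > 2 \<and> domination_number VH EH = 2 \<longrightarrow>
      italian_domination_number (lex_vertices VG VH) (lex_edges VG EG VH EH) = gamma_w VG EG [2, 2, 1])
  \<and> (domination_number VH EH \<ge> 3 \<longrightarrow>
      italian_domination_number (lex_vertices VG VH) (lex_edges VG EG VH EH) = gamma_w VG EG [2, 2, 2])"
proof -
  have fH: "finite VH" using H by (simp add: simple_graph_def)
  have exf: "\<exists>f. w_dominating (lex_vertices VG VH) (lex_edges VG EG VH EH) [2,0,0] f"
    using idf_exists by blast
  have c1: "domination_number VH EH = 1 \<longrightarrow>
      italian_domination_number (lex_vertices VG VH) (lex_edges VG EG VH EH) = gamma_w VG EG [2, 1, 0]"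
  proof
    assume d1: "domination_number VH EH = 1"
    obtain S where S: "dominating_set VH EH S" "card S = 1" using dom_attained d1 by metis
    then obtain ys where Sy: "S = {ys}" by (auto simp: card_1_singleton_iff)
    then have ys: "ys \<in> VH" and dom: "\<And>y. y \<in> VH \<Longrightarrow> y \<noteq> ys \<Longrightarrow> ys \<in> nbhd VH EH y"
      using S(1) unfolding dominating_set_def by auto
    show "italian_domination_number (lex_vertices VG VH) (lex_edges VG EG VH EH) = gamma_w VG EG [2, 1, 0]"
      unfolding italian_domination_number_def
    proof (rule gw_eq[OF exf])
      fix f assume fd: "w_dominating (lex_vertices VG VH) (lex_edges VG EG VH EH) [2,0,0] f"
      show "\<exists>g. w_dominating VG EG [2,1,0] g \<and> (\<Sum>v\<in>VG. g v) \<le> (\<Sum>v\<in>lex_vertices VG VH. f v)"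
      proof (rule lower_generic[OF G noiso H _ _ _ _ _ fd])
        fix h :: "'b \<Rightarrow> nat" and s assume hz: "\<forall>y. y \<notin> VH \<longrightarrow> h y = 0"
          and A: "\<forall>y\<in>VH. h y = 0 \<longrightarrow> s + (\<Sum>u\<in>nbhd VH EH y. h u) \<ge> 2"
        show "[2,1,0]!(min (\<Sum>y\<in>VH. h y) 2) \<le> s \<or>
          (2 \<le> (\<Sum>y\<in>VH. h y) \<and> [2,1,0]!(min (\<Sum>y\<in>VH. h y) 2) \<le> s + (\<Sum>y\<in>VH. h y) - 2)"
          by (rule loc_i[OF H nontriv hz A])
      qed simp_all
    next
      fix g assume gd: "w_dominating VG EG [2,1,0] g"
      show "\<exists>f. w_dominating (lex_vertices VG VH) (lex_edges VG EG VH EH) [2,0,0] f \<and>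
          (\<Sum>v\<in>lex_vertices VG VH. f v) \<le> (\<Sum>v\<in>VG. g v)"
      proof (rule upper_single[OF G H _ ys _ _ gd])
        fix k :: nat and y assume "0 < k" "k < 3" "y \<in> VH" "y \<noteq> ys"
        then have "k = 1 \<or> k = 2" "ys \<in> nbhd VH EH y" using dom by auto
        then show "[2,1,0]!k + (if ys \<in> nbhd VH EH y then k else 0) \<ge> 2" by auto
      qed simp_all
    qed
  qed
  have c2: "two_domination_number VH EH = 2 \<and> domination_number VH EH = 2 \<longrightarrow>
      italian_domination_number (lex_vertices VG VH) (lex_edges VG EG VH EH) = gamma_w VG EG [2, 2, 0]"
  proof
    assume d: "two_domination_number VH EH = 2 \<and> domination_number VH EH = 2"
    obtain S where S: "two_dominating_set VH EH S" "card S = 2" using two_dom_attained d by metis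
    then obtain a b where Sab: "S = {a, b}" "a \<noteq> b" by (auto simp: card_2_iff)
    then have ab: "a \<in> VH" "b \<in> VH" and dom: "\<And>y. y \<in> VH \<Longrightarrow> y \<notin> {a, b} \<Longrightarrow> card (nbhd VH EH y \<inter> {a, b}) \<ge> 2"
      using S(1) unfolding two_dominating_set_def by auto
    show "italian_domination_number (lex_vertices VG VH) (lex_edges VG EG VH EH) = gamma_w VG EG [2, 2, 0]"
      unfolding italian_domination_number_def
    proof (rule gw_eq[OF exf])
      fix f assume fd: "w_dominating (lex_vertices VG VH) (lex_edges VG EG VH EH) [2,0,0] f"
      show "\<exists>g. w_dominating VG EG [2,2,0] g \<and> (\<Sum>v\<in>VG. g v) \<le> (\<Sum>v\<in>lex_vertices VG VH. f v)"
      proof (rule lower_generic[OF G noiso H _ _ _ _ _ fd])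
        fix h :: "'b \<Rightarrow> nat" and s assume hz: "\<forall>y. y \<notin> VH \<longrightarrow> h y = 0"
          and A: "\<forall>y\<in>VH. h y = 0 \<longrightarrow> s + (\<Sum>u\<in>nbhd VH EH y. h u) \<ge> 2"
        show "[2,2,0]!(min (\<Sum>y\<in>VH. h y) 2) \<le> s \<or>
          (2 \<le> (\<Sum>y\<in>VH. h y) \<and> [2,2,0]!(min (\<Sum>y\<in>VH. h y) 2) \<le> s + (\<Sum>y\<in>VH. h y) - 2)"
          using loc_ii[OF H nontriv hz A] d by blast
      qed simp_all
    next
      fix g assume gd: "w_dominating VG EG [2,2,0] g"
      show "\<exists>f. w_dominating (lex_vertices VG VH) (lex_edges VG EG VH EH) [2,0,0] f \<and>
          (\<Sum>v\<in>lex_vertices VG VH. f v) \<le> (\<Sum>v\<in>VG. g v)"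
        by (rule upper_ab[OF G H _ ab Sab(2) _ _ _ gd]) (use dom in simp_all)
    qed
  qed
  have c3: "two_domination_number VH EH > 2 \<and> domination_number VH EH = 2 \<longrightarrow>
      italian_domination_number (lex_vertices VG VH) (lex_edges VG EG VH EH) = gamma_w VG EG [2, 2, 1]"
  proof
    assume d: "two_domination_number VH EH > 2 \<and> domination_number VH EH = 2"
    have I3: "italian_domination_number VH EH \<ge> 3" using Hiii[OF H nontriv] d by blast
    obtain S where S: "dominating_set VH EH S" "card S = 2" using dom_attained d by metis
    then obtain a b where Sab: "S = {a, b}" "a \<noteq> b" by (auto simp: card_2_iff)
    then have ab: "a \<in> VH" "b \<in> VH" and dom0: "\<And>y. y \<in> VH \<Longrightarrow> y \<notin> {a, b} \<Longrightarrow> nbhd VH EH y \<inter> {a, b} \<noteq> {}"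
      using S(1) unfolding dominating_set_def by auto
    have dom: "\<And>y. y \<in> VH \<Longrightarrow> y \<notin> {a, b} \<Longrightarrow> [2,2,1::nat]!2 + card (nbhd VH EH y \<inter> {a, b}) \<ge> 2"
    proof -
      fix y assume "y \<in> VH" "y \<notin> {a, b}"
      then have "nbhd VH EH y \<inter> {a, b} \<noteq> {}" by (rule dom0)
      then have "card (nbhd VH EH y \<inter> {a, b}) \<ge> 1" by (simp add: Suc_le_eq card_gt_0_iff)
      then show "[2,2,1::nat]!2 + card (nbhd VH EH y \<inter> {a, b}) \<ge> 2" by simp
    qed
    show "italian_domination_number (lex_vertices VG VH) (lex_edges VG EG VH EH) = gamma_w VG EG [2, 2, 1]"
      unfolding italian_domination_number_def
    proof (rule gw_eq[OF exf])
      fix f assume fd: "w_dominating (lex_vertices VG VH) (lex_edges VG EG VH EH) [2,0,0] f"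
      show "\<exists>g. w_dominating VG EG [2,2,1] g \<and> (\<Sum>v\<in>VG. g v) \<le> (\<Sum>v\<in>lex_vertices VG VH. f v)"
      proof (rule lower_generic[OF G noiso H _ _ _ _ _ fd])
        fix h :: "'b \<Rightarrow> nat" and s assume hz: "\<forall>y. y \<notin> VH \<longrightarrow> h y = 0"
          and A: "\<forall>y\<in>VH. h y = 0 \<longrightarrow> s + (\<Sum>u\<in>nbhd VH EH y. h u) \<ge> 2"
          and h3: "\<forall>y\<in>VH. h y < 3"
        show "[2,2,1]!(min (\<Sum>y\<in>VH. h y) 2) \<le> s \<or>
          (2 \<le> (\<Sum>y\<in>VH. h y) \<and> [2,2,1]!(min (\<Sum>y\<in>VH. h y) 2) \<le> s + (\<Sum>y\<in>VH. h y) - 2)"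
          using loc_iii[OF H nontriv hz A _ I3 h3] d by blast
      qed simp_all
    next
      fix g assume gd: "w_dominating VG EG [2,2,1] g"
      show "\<exists>f. w_dominating (lex_vertices VG VH) (lex_edges VG EG VH EH) [2,0,0] f \<and>
          (\<Sum>v\<in>lex_vertices VG VH. f v) \<le> (\<Sum>v\<in>VG. g v)"
        by (rule upper_ab[OF G H _ ab Sab(2) dom _ _ gd]) simp_all
    qed
  qed
  have c4: "domination_number VH EH \<ge> 3 \<longrightarrow>
      italian_domination_number (lex_vertices VG VH) (lex_edges VG EG VH EH) = gamma_w VG EG [2, 2, 2]"
  proof
    assume d: "domination_number VH EH \<ge> 3"
    have I4: "italian_domination_number VH EH \<ge> 4" using Hiv[OF H nontriv d cond] .
    have "VH \<noteq> {}" using nontriv by auto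
    then obtain ys where ys: "ys \<in> VH" by blast
    show "italian_domination_number (lex_vertices VG VH) (lex_edges VG EG VH EH) = gamma_w VG EG [2, 2, 2]"
      unfolding italian_domination_number_def
    proof (rule gw_eq[OF exf])
      fix f assume fd: "w_dominating (lex_vertices VG VH) (lex_edges VG EG VH EH) [2,0,0] f"
      show "\<exists>g. w_dominating VG EG [2,2,2] g \<and> (\<Sum>v\<in>VG. g v) \<le> (\<Sum>v\<in>lex_vertices VG VH. f v)"
      proof (rule lower_generic[OF G noiso H _ _ _ _ _ fd])
        fix h :: "'b \<Rightarrow> nat" and s assume hz: "\<forall>y. y \<notin> VH \<longrightarrow> h y = 0"
          and A: "\<forall>y\<in>VH. h y = 0 \<longrightarrow> s + (\<Sum>u\<in>nbhd VH EH y. h u) \<ge> 2"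
          and h3: "\<forall>y\<in>VH. h y < 3"
        show "[2,2,2]!(min (\<Sum>y\<in>VH. h y) 2) \<le> s \<or>
          (2 \<le> (\<Sum>y\<in>VH. h y) \<and> [2,2,2]!(min (\<Sum>y\<in>VH. h y) 2) \<le> s + (\<Sum>y\<in>VH. h y) - 2)"
          using loc_iv[OF H nontriv hz A d I4 h3] by blast
      qed simp_all
    next
      fix g assume gd: "w_dominating VG EG [2,2,2] g"
      show "\<exists>f. w_dominating (lex_vertices VG VH) (lex_edges VG EG VH EH) [2,0,0] f \<and>
          (\<Sum>v\<in>lex_vertices VG VH. f v) \<le> (\<Sum>v\<in>VG. g v)"
      proof (rule upper_single[OF G H _ ys _ _ gd])
        fix k :: nat and y assume "0 < k" "k < 3" "y \<in> VH" "y \<noteq> ys"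
        then have "k = 1 \<or> k = 2" by auto
        then show "[2,2,2]!k + (if ys \<in> nbhd VH EH y then k else 0) \<ge> 2" by auto
      qed simp_all
    qed
  qed
  show ?thesis using c1 c2 c3 c4 by blast
qed

end
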